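(* There exists an $AP_3$-covering sequence $A$ of nonnegative integers such that $$\limsup_{n\to\infty}\frac{A(n)}{\sqrt n}=\sqrt{15}.$$
   Context: A sequence (set) $A$ of nonnegative integers is called an $AP_k$-covering sequence if there exists an integer $n_0$ such that for every integer $n>n_0$ there exist $a_1,\dots,a_{k-1}\in A$ with $a_1<a_2<\cdots<a_{k-1}<n$ such that $a_1,\dots,a_{k-1},n$ form a $k$-term arithmetic progression. Here $k=3$. $A(n)$ denotes the counting function $A(n)=\#\{a\in A: a\le n\}$. *)

theory Defs
  imports Complex_Main "HOL-Library.Liminf_Limsup" "HOL-Library.Extended_Real"
begin

definition AP3_covering :: "nat set \<Rightarrow> bool" where
  "AP3_covering A \<longleftrightarrow>
     (\<exists>n0. \<forall>n>n0. \<exists>a1\<in>A. \<exists>a2\<in>A. a1 < a2 \<and> a2 < n \<and> a2 - a1 = n - a2)"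

definition counting :: "nat set \<Rightarrow> nat \<Rightarrow> nat" where
  "counting A n = card {a\<in>A. a \<le> n}"

end

theory Submission imports Defs "HOL-Real_Asymp.Real_Asymp" begin

fun spread :: "nat \<Rightarrow> nat" where
  "spread 0 = 0"
| "spread (Suc n) = 4 * spread (Suc n div 2) + Suc n mod 2"

fun sr :: "nat \<Rightarrow> nat" where
  "sr 0 = 0"
| "sr (Suc L) = 4 * sr L + 1"

lemma spread_eq: "spread n = 4 * spread (n div 2) + n mod 2"
  by (cases n) auto

declare spread.simps(2)[simp del]

lemma spread_0[simp]: "spread 0 = 0" by simp

lemma spread_1[simp]: "spread 1 = 1" by (simp add: spread.simps(2))

lemma spread_double: "spread (2*m) = 4 * spread m"
  using spread_eq[of "2*m"] by simp

lemma spread_double1: "spread (2*m+1) = 4 * spread m + 1"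
  using spread_eq[of "2*m+1"] by simp

lemma spread_Suc_gt: "spread n < spread (Suc n)"
proof (induction n rule: less_induct)
  case (less n)
  show ?case
  proof (cases "even n")
    case True
    then obtain q where q: "n = 2*q" by auto
    have "Suc n = 2*q+1" using q by simp
    then show ?thesis using q spread_double spread_double1 by simp
  next
    case False
    then obtain q where q: "n = 2*q+1" using oddE by blast
    have "Suc n = 2*(Suc q)" using q by simp
    have "q < n" using q by simp
    then have "spread q < spread (Suc q)" using less by blast
    have "spread (Suc n) = 4 * spread (Suc q)" using \<open>Suc n = 2*(Suc q)\<close> spread_double by metis
    moreover have "spread n = 4 * spread q + 1" using q spread_double1 by metis
    ultimately show ?thesis using \<open>spread q < spread (Suc q)\<close> by simp
  qed
qed

lemma spread_strict_mono: "strict_mono spread"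
  using spread_Suc_gt strict_mono_Suc_iff by blast

lemma spread_less_iff: "spread a < spread b \<longleftrightarrow> a < b"
  using spread_strict_mono strict_mono_less by blast

lemma spread_le_iff: "spread a \<le> spread b \<longleftrightarrow> a \<le> b"
  using spread_strict_mono strict_mono_less_eq by blast

lemma spread_inj: "inj spread"
  using spread_strict_mono strict_mono_imp_inj_on by blast

lemma spread_ge: "n \<le> spread n"
  using spread_strict_mono strict_mono_imp_increasing by blast

lemma spread_pow: "spread (2^k + r) = 4^k + spread r \<and> spread (2^k - 1) = sr k" if "r < 2^k" for k r
  using that
proof (induction k arbitrary: r)
  case 0
  then show ?case using spread_1 by simp
next
  case (Suc k)
  obtain r' b where rb: "r = 2*r' + b" "b < 2" by (metis mod_less_divisor mult_div_mod_eq zero_less_numeral)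
  have r': "r' < 2^k" using Suc.prems rb by simp
  from Suc.IH[OF r'] have ih: "spread (2^k + r') = 4^k + spread r'" "spread (2^k - 1) = sr k" by auto
  have "2^Suc k + r = 2*(2^k + r') + b" using rb by simp
  then have "spread (2^Suc k + r) = 4 * spread (2^k + r') + b"
  proof (cases "b = 0")
    case True
    then show ?thesis using \<open>2^Suc k + r = 2*(2^k + r') + b\<close> spread_double[of "2^k + r'"] by simp
  next
    case False
    then have "b = 1" using rb by simp
    then show ?thesis using \<open>2^Suc k + r = 2*(2^k + r') + b\<close> spread_double1[of "2^k + r'"] by simp
  qed
  moreover have "spread r = 4 * spread r' + b"
  proof -
    have "b = 0 \<or> b = 1" using rb by auto
    then show ?thesis using rb spread_double[of r'] spread_double1[of r'] by auto
  qed
  moreover have "(2::nat)^Suc k - 1 = 2*(2^k - 1) + 1"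
  proof -
    obtain t :: nat where t: "t = 2^k" by simp
    have "1 \<le> t" using t by simp
    then have "2*t - 1 = 2*(t-1)+1" by arith
    then show ?thesis using t by simp
  qed
  moreover have "spread (2*(2^k - 1) + 1) = 4 * sr k + 1" using spread_double1[of "2^k - 1"] ih(2) by simp
  ultimately show ?case using ih by simp
qed

lemma sr_eq: "3 * sr L + 1 = 4^L"
  by (induction L) auto

lemma sr_mono: "strict_mono sr"
  unfolding strict_mono_Suc_iff by simp

lemma sr_ge: "L \<le> sr L"
  using sr_mono strict_mono_imp_increasing by blast

definition UU :: "nat set" where "UU = range spread"
definition Vset :: "nat \<Rightarrow> nat set" where "Vset j = {sr j + spread r | r. r < 2^j}"
definition VV :: "nat set" where "VV = (\<Union>j. Vset j)"
definition FF :: "nat set" where "FF = {sr L - 1 | L. True} \<union> {sr L - 2 | L. True}"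
definition AA :: "nat set" where "AA = UU \<union> VV \<union> FF"

lemma UU_0: "0 \<in> UU" unfolding UU_def by (metis rangeI spread_0)
lemma VV_0: "0 \<in> VV" unfolding VV_def Vset_def by (rule UN_I[of 0]) auto

lemma UU_4: assumes "x \<in> UU" shows "4*x \<in> UU" "4*x+1 \<in> UU"
proof -
  obtain m where m: "x = spread m" using assms unfolding UU_def by auto
  show "4*x \<in> UU" unfolding UU_def using spread_double[of m] m by (metis rangeI)
  show "4*x+1 \<in> UU" unfolding UU_def using spread_double1[of m] m by (metis rangeI)
qed

lemma VV_4: assumes "x \<in> VV" shows "4*x+1 \<in> VV" "4*x+2 \<in> VV"
proof -
  obtain j r where jr: "x = sr j + spread r" "r < 2^j" using assms unfolding VV_def Vset_def by auto
  have "4*x+1 = sr (Suc j) + spread (2*r)" using jr spread_double[of r] by simp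
  moreover have "2*r < 2^Suc j" using jr by simp
  ultimately show "4*x+1 \<in> VV" unfolding VV_def Vset_def by blast
  have "4*x+2 = sr (Suc j) + spread (2*r+1)" using jr spread_double1[of r] by simp
  moreover have "2*r+1 < 2^Suc j" using jr by simp
  ultimately show "4*x+2 \<in> VV" unfolding VV_def Vset_def by blast
qed

lemma rep_step:
  assumes a: "a2 \<in> VV" "a1 \<in> UU" "2*a2 = q + a1" "a1 \<le> a2" and n: "n = 4*q + d" "1 \<le> d" "d \<le> 4"
  shows "\<exists>a2\<in>VV. \<exists>a1\<in>UU. 2*a2 = n + a1 \<and> a1 \<le> a2"
proof -
  have "d = 1 \<or> d = 2 \<or> d = 3 \<or> d = 4" using n by arith
  then show ?thesis
  proof (elim disjE)
    assume "d = 1"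
    then have "2*(4*a2+1) = n + (4*a1+1)" "4*a1+1 \<le> 4*a2+1" using a n by arith+
    then show ?thesis using a UU_4 VV_4 by blast
  next
    assume "d = 2"
    then have "2*(4*a2+1) = n + (4*a1)" "4*a1 \<le> 4*a2+1" using a n by arith+
    then show ?thesis using a UU_4 VV_4 by blast
  next
    assume "d = 3"
    then have "2*(4*a2+2) = n + (4*a1+1)" "4*a1+1 \<le> 4*a2+2" using a n by arith+
    then show ?thesis using a UU_4 VV_4 by blast
  next
    assume "d = 4"
    then have "2*(4*a2+2) = n + (4*a1)" "4*a1 \<le> 4*a2+2" using a n by arith+
    then show ?thesis using a UU_4 VV_4 by blast
  qed
qed

lemma rep: "\<exists>a2\<in>VV. \<exists>a1\<in>UU. 2*a2 = n + a1 \<and> a1 \<le> a2"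
proof (induction n rule: less_induct)
  case (less n)
  show ?case
  proof (cases "n = 0")
    case True
    then show ?thesis using UU_0 VV_0 by auto
  next
    case False
    define q where "q = (n - 1) div 4"
    define d where "d = (n - 1) mod 4 + 1"
    have nq: "n = 4*q + d" "1 \<le> d" "d \<le> 4" using False unfolding q_def d_def by arith+
    have "q < n" using nq by simp
    then obtain a2 a1 where "a2 \<in> VV" "a1 \<in> UU" "2*a2 = q + a1" "a1 \<le> a2" using less by blast
    then show ?thesis using rep_step nq by blast
  qed
qed

lemma UV_aux: "r < 2^j \<Longrightarrow> sr j + spread r = spread m \<Longrightarrow> \<exists>L. spread m = sr L"
proof (induction j arbitrary: r m)
  case 0
  then show ?case by (metis sr.simps(1) spread_0 add_0 less_one power_0)
next
  case (Suc j)
  obtain r' b where rb: "r = 2*r' + b" "b < 2" by (metis mod_less_divisor mult_div_mod_eq zero_less_numeral)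
  obtain m' c where mc: "m = 2*m' + c" "c < 2" by (metis mod_less_divisor mult_div_mod_eq zero_less_numeral)
  have sr_: "spread r = 4 * spread r' + b"
  proof -
    have "b = 0 \<or> b = 1" using rb by auto
    then show ?thesis using rb spread_double[of r'] spread_double1[of r'] by auto
  qed
  have sm: "spread m = 4 * spread m' + c"
  proof -
    have "c = 0 \<or> c = 1" using mc by auto
    then show ?thesis using mc spread_double[of m'] spread_double1[of m'] by auto
  qed
  have eq: "4 * (sr j + spread r') + (1 + b) = 4 * spread m' + c" using Suc.prems(2) sr_ sm by simp
  have "b = 0" "c = 1"
    using eq rb(2) mc(2) by presburger+
  then have "sr j + spread r' = spread m'" using eq by simp
  moreover have "r' < 2^j" using Suc.prems(1) rb by simp
  ultimately obtain L where "spread m' = sr L" using Suc.IH by blast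
  then have "spread m = sr (Suc L)" using sm \<open>c = 1\<close> by simp
  then show ?case by blast
qed

lemma UV_sr: assumes "x \<in> UU" "x \<in> VV" shows "\<exists>L. x = sr L"
proof -
  obtain m where m: "x = spread m" using assms(1) unfolding UU_def by auto
  obtain j r where jr: "x = sr j + spread r" "r < 2^j" using assms(2) unfolding VV_def Vset_def by auto
  show ?thesis using UV_aux[OF jr(2)] jr(1) m by metis
qed

lemma AA_covering: "AP3_covering AA"
  unfolding AP3_covering_def
proof (intro exI[of _ 4] allI impI)
  fix n :: nat assume n4: "n > 4"
  obtain a2 a1 where a: "a2 \<in> VV" "a1 \<in> UU" "2*a2 = n + a1" "a1 \<le> a2" using rep by blast
  show "\<exists>a1\<in>AA. \<exists>a2\<in>AA. a1 < a2 \<and> a2 < n \<and> a2 - a1 = n - a2"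
  proof (cases "a1 < a2")
    case True
    then have "a2 < n" "a2 - a1 = n - a2" using a by arith+
    moreover have "a1 \<in> AA" "a2 \<in> AA" using a unfolding AA_def by auto
    ultimately show ?thesis using True by blast
  next
    case False
    then have "a1 = a2" "n = a2" using a by arith+
    then obtain L where L: "n = sr L" using UV_sr a by metis
    have "sr L - 1 \<in> AA" "sr L - 2 \<in> AA" unfolding AA_def FF_def by blast+
    moreover have "sr L - 2 < sr L - 1" "sr L - 1 < n" "(sr L - 1) - (sr L - 2) = n - (sr L - 1)" using L n4 by arith+
    ultimately show ?thesis by blast
  qed
qed



lemma spread_2pow: "spread (2^k) = 4^k"
  using spread_pow[of 0 k] by simp

lemma spread_2pow_plus: "r < 2^k \<Longrightarrow> spread (2^k + r) = 4^k + spread r"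
  using spread_pow by blast

lemma spread_2pow_minus: "spread (2^k - 1) = sr k"
  using spread_pow[of 0 k] by simp

definition cU :: "nat \<Rightarrow> nat" where "cU x = card {m. spread m \<le> x}"

lemma finU: "finite {m. spread m \<le> x}"
  by (rule finite_subset[of _ "{..x}"]) (use spread_ge le_trans in blast, simp)

lemma card_UU: "card {u\<in>UU. u \<le> x} = cU x"
proof -
  have "{u\<in>UU. u \<le> x} = spread ` {m. spread m \<le> x}" unfolding UU_def by auto
  then show ?thesis unfolding cU_def using card_image[of spread] spread_inj by (simp add: inj_on_def)
qed

lemma cU_lt: assumes "x < 4^k" shows "cU x \<le> 2^k"
proof -
  have "{m. spread m \<le> x} \<subseteq> {..<2^k}"
  proof
    fix m assume "m \<in> {m. spread m \<le> x}"
    then have "spread m < spread (2^k)" using assms spread_2pow by simp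
    then show "m \<in> {..<2^k}" using spread_less_iff by simp
  qed
  then show ?thesis unfolding cU_def using card_mono[OF finite_lessThan, of _ "2^k"] by fastforce
qed

lemma cU_split: assumes "4^k \<le> x" "x < 2*4^k" shows "cU x \<le> 2^k + cU (x - 4^k)"
proof -
  have "{m. spread m \<le> x} \<subseteq> {..<2^k} \<union> (\<lambda>r. 2^k + r) ` {r. spread r \<le> x - 4^k}"
  proof
    fix m assume m: "m \<in> {m. spread m \<le> x}"
    show "m \<in> {..<2^k} \<union> (\<lambda>r. 2^k + r) ` {r. spread r \<le> x - 4^k}"
    proof (cases "m < 2^k")
      case True then show ?thesis by simp
    next
      case False
      have "spread m < spread (2^Suc k)" using m assms spread_2pow[of "Suc k"] by simp
      then have "m < 2^Suc k" using spread_less_iff by blast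
      then obtain r where r: "m = 2^k + r" "r < 2^k" proof -
        have "m - 2^k < 2^k" using \<open>m < 2^Suc k\<close> False by simp
        then show ?thesis using False that[of "m - 2^k"] by simp
      qed
      then have "spread m = 4^k + spread r" using spread_2pow_plus by simp
      then have "spread r \<le> x - 4^k" using m by simp
      then show ?thesis using r by blast
    qed
  qed
  then have "cU x \<le> card ({..<2^k} \<union> (\<lambda>r. 2^k + r) ` {r. spread r \<le> x - 4^k})"
    unfolding cU_def by (intro card_mono) (auto intro: finU)
  also have "\<dots> \<le> card {..<(2::nat)^k} + card ((\<lambda>r. 2^k + r) ` {r. spread r \<le> x - 4^k})" by (rule card_Un_le)
  also have "\<dots> \<le> 2^k + cU (x - 4^k)" unfolding cU_def using card_image_le[OF finU] by simp
  finally show ?thesis .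
qed

lemma cU_0: "cU 0 \<le> 1" using cU_lt[of 0 0] by simp

lemma real_ineq3: fixes a t :: real assumes "0 \<le> a" "0 \<le> t" "3*t \<le> a^2"
  shows "a + sqrt (3*t) \<le> sqrt (3*a^2 + 3*t)"
proof (rule real_le_rsqrt)
  have s: "sqrt (3*t) \<le> a" using assms real_sqrt_le_mono[of "3*t" "a^2"] by simp
  have s2: "(sqrt (3*t))^2 = 3*t" using assms by simp
  have "(a + sqrt (3*t))^2 = a^2 + 2*a*sqrt(3*t) + (sqrt (3*t))^2" by (simp add: power2_eq_square algebra_simps)
  also have "\<dots> \<le> a^2 + 2*a*a + 3*t" using s s2 assms(1) by (simp add: mult_left_mono)
  finally show "(a + sqrt (3*t))^2 \<le> 3*a^2 + 3*t" by (simp add: power2_eq_square)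
qed

lemma ex_k4: "1 \<le> (x::nat) \<Longrightarrow> \<exists>k. 4^k \<le> x \<and> x < 4^(k+1)"
  using ex_power_ivl1[of 4 x] by simp

lemma pow4: "(4::nat)^k = 2^k * 2^k"
proof -
  have "(4::nat)^k = (2*2)^k" by simp
  also have "\<dots> = 2^k * 2^k" by (rule power_mult_distrib)
  finally show ?thesis .
qed

lemma pow4r: "real (4^k) = (real (2^k))^2"
  using pow4[of k] by (simp add: power2_eq_square)

lemma cU_bound: "real (cU x) \<le> sqrt (3 * real x) + 1"
proof (induction x rule: less_induct)
  case (less x)
  show ?case
  proof (cases "x = 0")
    case True
    then show ?thesis using cU_0 by simp
  next
    case False
    then obtain k where k: "4^k \<le> x" "x < 4^(k+1)" using ex_k4 by (metis less_one not_le)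
    define y where "y = x - 4^k"
    have xy: "x = 4^k + y" using k y_def by simp
    show ?thesis
    proof (cases "3*y \<le> 4^k")
      case True
      have "0 < (4::nat)^k" by simp
      then have "x < 2*4^k" using True xy by linarith
      then have c1: "cU x \<le> 2^k + cU y" using cU_split k y_def by blast
      have "y < x" using xy by simp
      then have c2: "real (cU y) \<le> sqrt (3 * real y) + 1" using less by blast
      have "3 * real y \<le> (real (2^k))^2" using True pow4r[of k] by (metis of_nat_le_iff of_nat_mult of_nat_numeral)
      then have c3: "real (2^k) + sqrt (3 * real y) \<le> sqrt (3 * (real (2^k))^2 + 3 * real y)"
        by (intro real_ineq3) simp_all
      have c4: "3 * (real (2^k))^2 + 3 * real y = 3 * real x"
        using xy pow4r[of k] by simp
      have "real (cU x) \<le> real (2^k) + real (cU y)" using c1 by (metis of_nat_add of_nat_le_iff)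
      moreover have c5: "real (2^k) + sqrt (3 * real y) \<le> sqrt (3 * real x)" using c3 c4 by metis
      ultimately show ?thesis using c2 by linarith
    next
      case False
      have c1: "cU x \<le> 2^(k+1)" using cU_lt k by blast
      have "real (2^(k+1)) \<le> sqrt (3 * real x)"
      proof (rule real_le_rsqrt)
        have "(real (2^(k+1)))^2 = 4 * real (4^k)" using pow4r[of k] by (simp add: power2_eq_square)
        also have "\<dots> \<le> 3 * real x"
        proof -
          have "4^k \<le> 3*y" using False by simp
          then have "real (4^k) \<le> 3 * real y" by (metis of_nat_le_iff of_nat_mult of_nat_numeral)
          moreover have "real x = real (4^k) + real y" using xy by simp
          ultimately show ?thesis by linarith
        qed
        finally show "(real (2^(k+1)))^2 \<le> 3 * real x" .
      qed
      then show ?thesis using c1 by (metis of_nat_le_iff add_increasing2 order_trans zero_le_one)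
    qed
  qed
qed

definition cV :: "nat \<Rightarrow> nat" where "cV x = card {v\<in>VV. v \<le> x}"

lemma sr_less_iff: "sr a < sr b \<longleftrightarrow> a < b"
  using sr_mono strict_mono_less by blast

lemma sr_le_iff: "sr a \<le> sr b \<longleftrightarrow> a \<le> b"
  using sr_mono strict_mono_less_eq by blast

lemma spread_le_sr: "r < 2^j \<Longrightarrow> spread r \<le> sr j"
  using spread_le_iff[of r "2^j - 1"] spread_2pow_minus[of j] by simp

lemma sum_pow2: "(\<Sum>j\<le>k. (2::nat)^j) + 1 = 2^(k+1)"
  by (induction k) auto

lemma cV_upper:
  assumes "sr (Suc k) \<le> x" "x < sr (Suc (Suc k))"
  shows "cV x + 1 \<le> 2^(k+1) + cU (x - sr (Suc k))"
proof -
  define W1 where "W1 = (\<lambda>(j,r). sr j + spread r) ` (SIGMA j:{..k}. {..<(2::nat)^j})"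
  define W2 where "W2 = (\<lambda>r. sr (Suc k) + spread r) ` {r. spread r \<le> x - sr (Suc k)}"
  have sub: "{v\<in>VV. v \<le> x} \<subseteq> W1 \<union> W2"
  proof
    fix v assume v: "v \<in> {v\<in>VV. v \<le> x}"
    then obtain j r where jr: "v = sr j + spread r" "r < 2^j" unfolding VV_def Vset_def by auto
    have "sr j < sr (Suc (Suc k))" using jr v assms by simp
    then have "j < Suc (Suc k)" using sr_less_iff by blast
    then have "j \<le> k \<or> j = Suc k" by arith
    then show "v \<in> W1 \<union> W2"
    proof
      assume "j \<le> k"
      then have "(j, r) \<in> (SIGMA j:{..k}. {..<(2::nat)^j})" using jr by simp
      moreover have "v = (\<lambda>(j,r). sr j + spread r) (j, r)" using jr by simp
      ultimately have "v \<in> W1" unfolding W1_def by (rule rev_image_eqI)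
      then show ?thesis by simp
    next
      assume "j = Suc k"
      have "v \<le> x" using v by simp
      then have "sr (Suc k) + spread r \<le> x" using jr \<open>j = Suc k\<close> by blast
      then have "spread r \<le> x - sr (Suc k)" by arith
      then have "v \<in> W2" unfolding W2_def using jr \<open>j = Suc k\<close> by blast
      then show ?thesis by simp
    qed
  qed
  have f1: "finite W1" unfolding W1_def by simp
  have f2: "finite W2" unfolding W2_def using finU by simp
  have "cV x \<le> card (W1 \<union> W2)" unfolding cV_def using sub f1 f2 by (simp add: card_mono)
  also have "\<dots> \<le> card W1 + card W2" by (rule card_Un_le)
  also have "card W1 \<le> card (SIGMA j:{..k}. {..<(2::nat)^j})" unfolding W1_def by (rule card_image_le) simp
  also have "card (SIGMA j:{..k}. {..<(2::nat)^j}) = (\<Sum>j\<le>k. 2^j)" by (simp add: card_SigmaI)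
  also have "card W2 \<le> cU (x - sr (Suc k))" unfolding W2_def cU_def using card_image_le[OF finU] by blast
  finally show ?thesis using sum_pow2[of k] by linarith
qed

lemma cV_0: "cV 0 \<le> 1"
proof -
  have "{v\<in>VV. v \<le> 0} \<subseteq> {0}" by auto
  then have "card {v\<in>VV. v \<le> 0} \<le> card {0::nat}" by (intro card_mono) auto
  then show ?thesis unfolding cV_def by simp
qed

lemma ex_ksr: "1 \<le> x \<Longrightarrow> \<exists>k. sr (Suc k) \<le> x \<and> x < sr (Suc (Suc k))"
proof (induction x)
  case 0 then show ?case by simp
next
  case (Suc x)
  show ?case
  proof (cases "x = 0")
    case True then show ?thesis by (intro exI[of _ 0]) simp
  next
    case False
    then obtain k where k: "sr (Suc k) \<le> x" "x < sr (Suc (Suc k))" using Suc by auto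
    show ?thesis
    proof (cases "Suc x < sr (Suc (Suc k))")
      case True then show ?thesis using k by (intro exI[of _ k]) simp
    next
      case False
      then have "Suc x = sr (Suc (Suc k))" using k by simp
      moreover have "sr (Suc (Suc k)) < sr (Suc (Suc (Suc k)))" by simp
      ultimately show ?thesis by (intro exI[of _ "Suc k"]) simp
    qed
  qed
qed

lemma real_R1: fixes a t :: real assumes "0 \<le> a" "0 \<le> t"
  shows "2*a + sqrt (3*t) \<le> sqrt (5*a^2 + 15*t)"
proof (rule real_le_rsqrt)
  define q where "q = sqrt (3*t)"
  have q2: "q^2 = 3*t" unfolding q_def using assms by simp
  have "(2*a + q)^2 = 4*a^2 + 4*a*q + q^2" by (simp add: power2_eq_square algebra_simps)
  also have "\<dots> \<le> 5*a^2 + 15*t"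
  proof -
    have "0 \<le> (a - 2*q)^2" by simp
    then have "4*a*q \<le> a^2 + 4*q^2" by (simp add: power2_eq_square algebra_simps)
    then show ?thesis using q2 by linarith
  qed
  finally show "(2*a + sqrt (3*t))^2 \<le> 5*a^2 + 15*t" unfolding q_def .
qed

lemma real_R2: fixes a t :: real assumes "0 \<le> a" "0 \<le> t" "3*t \<le> a^2"
  shows "3*a + sqrt (3*t) \<le> sqrt (15*a^2 + 15*t)"
proof (rule real_le_rsqrt)
  define q where "q = sqrt (3*t)"
  have q2: "q^2 = 3*t" unfolding q_def using assms by simp
  have qa: "q \<le> a" unfolding q_def using assms real_sqrt_le_mono[of "3*t" "a^2"] by simp
  have "(3*a + q)^2 = 9*a^2 + 6*a*q + q^2" by (simp add: power2_eq_square algebra_simps)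
  also have "\<dots> \<le> 15*a^2 + 15*t"
  proof -
    have "a*q \<le> a*a" using qa assms(1) by (simp add: mult_left_mono)
    then show ?thesis using q2 assms by (simp add: power2_eq_square)
  qed
  finally show "(3*a + sqrt (3*t))^2 \<le> 15*a^2 + 15*t" unfolding q_def .
qed

lemma sqrt5_le3: "sqrt (5::real) \<le> 3"
  by (rule real_le_lsqrt) simp_all

lemma UV_upper: "real (cU x) + real (cV x) \<le> sqrt (15 * real x) + 3"
proof (cases "x = 0")
  case True
  then show ?thesis using cU_0 cV_0 by simp
next
  case False
  then obtain k where k: "sr (Suc k) \<le> x" "x < sr (Suc (Suc k))" using ex_ksr by (metis less_one not_le)
  define S where "S = sr (Suc k)"
  define p :: nat where "p = 2^(k+1)"
  have SP: "3*S + 1 = 4^(k+1)" unfolding S_def using sr_eq[of "Suc k"] by simp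
  have S2: "sr (Suc (Suc k)) = S + 4^(k+1)" unfolding S_def using SP S_def by simp
  have Pp: "real (4^(k+1)) = (real p)^2" unfolding p_def by (rule pow4r)
  have cv: "cV x + 1 \<le> p + cU (x - S)" using cV_upper[OF k] unfolding p_def S_def .
  show ?thesis
  proof (cases "x < 4^(k+1)")
    case True
    define z where "z = x - S"
    have xz: "x = S + z" unfolding z_def S_def using k by simp
    have cu: "cU x \<le> p" unfolding p_def using cU_lt True by blast
    have cz: "real (cU z) \<le> sqrt (3 * real z) + 1" by (rule cU_bound)
    have sum: "real (cU x) + real (cV x) \<le> 2 * real p + sqrt (3 * real z)"
    proof -
      have "real (cV x + 1) \<le> real (p + cU z)" using cv unfolding z_def by (simp only: of_nat_le_iff)
      then have "real (cV x) + 1 \<le> real p + real (cU z)" by simp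
      moreover have "real (cU x) \<le> real p" using cu by simp
      ultimately show ?thesis using cz by linarith
    qed
    have r1: "2 * real p + sqrt (3 * real z) \<le> sqrt (5 * (real p)^2 + 15 * real z)"
      by (rule real_R1) simp_all
    have e: "5 * (real p)^2 + 15 * real z = 15 * real x + 5"
    proof -
      have "real (3 * S + 1) = (real p)^2" using SP Pp by simp
      then have "3 * real S + 1 = (real p)^2" by simp
      moreover have "real x = real S + real z" using xz by simp
      ultimately show ?thesis by linarith
    qed
    have "sqrt (15 * real x + 5) \<le> sqrt (15 * real x) + sqrt 5"
      by (rule sqrt_add_le_add_sqrt) simp_all
    moreover have "2 * real p + sqrt (3 * real z) \<le> sqrt (15 * real x + 5)" using r1 e by simp
    ultimately show ?thesis using sum sqrt5_le3 by linarith
  next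
    case False
    define y where "y = x - 4^(k+1)"
    have xy: "x = 4^(k+1) + y" unfolding y_def using False by simp
    have S_lt: "S < 4^(k+1)" using SP by linarith
    have "x < 2 * 4^(k+1)" using k S2 S_lt unfolding S_def by simp
    moreover have "4^(k+1) \<le> x" using False by simp
    ultimately have cu: "cU x \<le> p + cU y" unfolding p_def y_def using cU_split[of "k+1" x] by blast
    have cy: "real (cU y) \<le> sqrt (3 * real y) + 1" by (rule cU_bound)
    have "x - S < 4^(k+1)" using k S2 unfolding S_def by simp
    then have czp: "cU (x - S) \<le> p" unfolding p_def using cU_lt by blast
    have sum: "real (cU x) + real (cV x) \<le> 3 * real p + sqrt (3 * real y)"
    proof -
      have "cU x + cV x + 1 \<le> 3 * p + cU y" using cu cv czp by linarith
      then have "real (cU x + cV x + 1) \<le> real (3 * p + cU y)" by (simp only: of_nat_le_iff)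
      then have "real (cU x) + real (cV x) + 1 \<le> 3 * real p + real (cU y)" by simp
      then show ?thesis using cy by linarith
    qed
    have y3: "3 * real y \<le> (real p)^2"
    proof -
      have "y < S" using xy k S2 unfolding S_def by simp
      then have "3 * y \<le> 4^(k+1)" using SP by linarith
      then have "real (3*y) \<le> real (4^(k+1))" by (simp only: of_nat_le_iff)
      then show ?thesis using Pp by simp
    qed
    have r2: "3 * real p + sqrt (3 * real y) \<le> sqrt (15 * (real p)^2 + 15 * real y)"
      by (rule real_R2) (simp_all add: y3)
    have e: "15 * (real p)^2 + 15 * real y = 15 * real x" using xy Pp by simp
    have "3 * real p + sqrt (3 * real y) \<le> sqrt (15 * real x)" using r2 e by simp
    then show ?thesis using sum by linarith
  qed
qed

lemma finT: "finite {L. sr L \<le> y}"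
  by (rule finite_subset[of _ "{..y}"]) (use sr_ge le_trans in blast, simp)

lemma cardT: "real (card {L. sr L \<le> y}) \<le> log 4 (3 * real y + 1) + 1"
proof -
  define c where "c = log 4 (3 * real y + 1)"
  have c0: "0 \<le> c" unfolding c_def by simp
  have "{L. sr L \<le> y} \<subseteq> {..nat \<lfloor>c\<rfloor>}"
  proof
    fix L assume "L \<in> {L. sr L \<le> y}"
    then have "sr L \<le> y" by simp
    then have "4^L \<le> 3*y + 1" using sr_eq[of L] by linarith
    then have "real (4^L) \<le> real (3*y+1)" by (simp only: of_nat_le_iff)
    then have "(4::real)^L \<le> 3 * real y + 1" by simp
    then have "log 4 ((4::real)^L) \<le> c" unfolding c_def by (intro log_mono) simp_all
    then have "real L \<le> c" by simp
    then have "L \<le> nat \<lfloor>c\<rfloor>" by (metis le_nat_floor of_nat_le_iff)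
    then show "L \<in> {..nat \<lfloor>c\<rfloor>}" by simp
  qed
  then have "card {L. sr L \<le> y} \<le> card {..nat \<lfloor>c\<rfloor>}" by (intro card_mono) simp_all
  then have "real (card {L. sr L \<le> y}) \<le> real (nat \<lfloor>c\<rfloor>) + 1" by simp
  moreover have "real (nat \<lfloor>c\<rfloor>) \<le> c" using c0 by linarith
  ultimately show ?thesis unfolding c_def by linarith
qed

lemma cardF: "card {a\<in>FF. a \<le> x} \<le> 2 * card {L. sr L \<le> x + 2}"
proof -
  define T where "T = {L. sr L \<le> x + 2}"
  have "{a\<in>FF. a \<le> x} \<subseteq> (\<lambda>L. sr L - 1) ` T \<union> (\<lambda>L. sr L - 2) ` T"
    unfolding FF_def T_def by auto
  then have "card {a\<in>FF. a \<le> x} \<le> card ((\<lambda>L. sr L - 1) ` T \<union> (\<lambda>L. sr L - 2) ` T)"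
    by (intro card_mono) (simp_all add: T_def finT)
  also have "\<dots> \<le> card ((\<lambda>L. sr L - 1) ` T) + card ((\<lambda>L. sr L - 2) ` T)" by (rule card_Un_le)
  also have "\<dots> \<le> card T + card T" using card_image_le[OF finT[of "x+2"], of "\<lambda>L. sr L - 1"] card_image_le[OF finT[of "x+2"], of "\<lambda>L. sr L - 2"] unfolding T_def by linarith
  finally show ?thesis unfolding T_def by simp
qed

lemma count_upper: "real (counting AA x) \<le> sqrt (15 * real x) + 5 + 2 * log 4 (3 * real x + 7)"
proof -
  have "{a\<in>AA. a \<le> x} = {a\<in>UU. a \<le> x} \<union> {a\<in>VV. a \<le> x} \<union> {a\<in>FF. a \<le> x}" unfolding AA_def by auto
  then have "counting AA x = card ({a\<in>UU. a \<le> x} \<union> {a\<in>VV. a \<le> x} \<union> {a\<in>FF. a \<le> x})"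
    unfolding counting_def by simp
  also have "\<dots> \<le> card ({a\<in>UU. a \<le> x} \<union> {a\<in>VV. a \<le> x}) + card {a\<in>FF. a \<le> x}" by (rule card_Un_le)
  also have "\<dots> \<le> card {a\<in>UU. a \<le> x} + card {a\<in>VV. a \<le> x} + card {a\<in>FF. a \<le> x}"
    using card_Un_le[of "{a\<in>UU. a \<le> x}" "{a\<in>VV. a \<le> x}"] by linarith
  also have "\<dots> \<le> cU x + cV x + 2 * card {L. sr L \<le> x + 2}" using card_UU cardF unfolding cV_def by simp
  finally have "real (counting AA x) \<le> real (cU x + cV x + 2 * card {L. sr L \<le> x + 2})"
    by (simp only: of_nat_le_iff)
  then have "real (counting AA x) \<le> real (cU x) + real (cV x) + 2 * real (card {L. sr L \<le> x + 2})"
    by simp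
  moreover have "real (card {L. sr L \<le> x + 2}) \<le> log 4 (3 * real x + 7) + 1"
    using cardT[of "x+2"] by (simp add: algebra_simps)
  ultimately show ?thesis using UV_upper[of x] by linarith
qed

lemma fin_le: "finite {a\<in>(X::nat set). a \<le> N}"
  by (rule finite_subset[of _ "{..N}"]) auto

lemma card_Vset_part: "card ((\<lambda>r. sr j + spread r) ` {..<m}) = m"
proof -
  have "inj_on (\<lambda>r. sr j + spread r) {..<m}"
    by (rule inj_onI) (use spread_inj in \<open>simp add: inj_def\<close>)
  then show ?thesis by (simp add: card_image)
qed

lemma V_low: "card {v\<in>VV. v \<le> 2 * sr j} + 1 \<ge> 2^(j+1)"
proof (induction j)
  case 0
  have "{0::nat} \<subseteq> {v\<in>VV. v \<le> 2 * sr 0}" using VV_0 by simp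
  then have "card {0::nat} \<le> card {v\<in>VV. v \<le> 2 * sr 0}" by (rule card_mono[OF fin_le])
  then show ?case by simp
next
  case (Suc j)
  define B where "B = (\<lambda>r. sr (Suc j) + spread r) ` {..<2^(Suc j)}"
  have sub: "{v\<in>VV. v \<le> 2 * sr j} \<union> B \<subseteq> {v\<in>VV. v \<le> 2 * sr (Suc j)}"
  proof
    fix v assume "v \<in> {v\<in>VV. v \<le> 2 * sr j} \<union> B"
    then show "v \<in> {v\<in>VV. v \<le> 2 * sr (Suc j)}"
    proof
      assume "v \<in> {v\<in>VV. v \<le> 2 * sr j}" then show ?thesis by simp
    next
      assume "v \<in> B"
      then obtain r where r: "v = sr (Suc j) + spread r" "r < 2^(Suc j)" unfolding B_def by auto
      then have "v \<in> VV" unfolding VV_def Vset_def by blast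
      moreover have "spread r \<le> sr (Suc j)" using spread_le_sr r by blast
      ultimately show ?thesis using r by simp
    qed
  qed
  have disj: "{v\<in>VV. v \<le> 2 * sr j} \<inter> B = {}"
  proof (rule equals0I)
    fix v assume v: "v \<in> {v\<in>VV. v \<le> 2 * sr j} \<inter> B"
    then have "sr (Suc j) \<le> v" unfolding B_def by auto
    moreover have "v \<le> 2 * sr j" using v by simp
    moreover have "2 * sr j < sr (Suc j)" by simp
    ultimately show False by linarith
  qed
  have fB: "finite B" unfolding B_def by simp
  have "card ({v\<in>VV. v \<le> 2 * sr j} \<union> B) = card {v\<in>VV. v \<le> 2 * sr j} + card B"
    by (rule card_Un_disjoint[OF fin_le fB disj])
  moreover have "card B = 2^(Suc j)" unfolding B_def by (rule card_Vset_part)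
  moreover have "card ({v\<in>VV. v \<le> 2 * sr j} \<union> B) \<le> card {v\<in>VV. v \<le> 2 * sr (Suc j)}"
    by (rule card_mono[OF fin_le sub])
  ultimately show ?case using Suc.IH by simp
qed

definition NN :: "nat \<Rightarrow> nat" where "NN k = sr (Suc k) + sr k"

lemma V_lowN: "card {v\<in>VV. v \<le> NN k} + 1 \<ge> 2^(k+1) + 2^k"
proof -
  define B where "B = (\<lambda>r. sr (Suc k) + spread r) ` {..<2^k}"
  have sub: "{v\<in>VV. v \<le> 2 * sr k} \<union> B \<subseteq> {v\<in>VV. v \<le> NN k}"
  proof
    fix v assume "v \<in> {v\<in>VV. v \<le> 2 * sr k} \<union> B"
    then show "v \<in> {v\<in>VV. v \<le> NN k}"
    proof
      assume "v \<in> {v\<in>VV. v \<le> 2 * sr k}" then show ?thesis unfolding NN_def by simp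
    next
      assume "v \<in> B"
      then obtain r where r: "v = sr (Suc k) + spread r" "r < 2^k" unfolding B_def by auto
      have "r < 2^(Suc k)" using r by simp
      then have "v \<in> VV" unfolding VV_def Vset_def using r by blast
      moreover have "spread r \<le> sr k" using spread_le_sr r by blast
      ultimately show ?thesis using r unfolding NN_def by simp
    qed
  qed
  have disj: "{v\<in>VV. v \<le> 2 * sr k} \<inter> B = {}"
  proof (rule equals0I)
    fix v assume v: "v \<in> {v\<in>VV. v \<le> 2 * sr k} \<inter> B"
    then have "sr (Suc k) \<le> v" unfolding B_def by auto
    moreover have "v \<le> 2 * sr k" using v by simp
    moreover have "2 * sr k < sr (Suc k)" by simp
    ultimately show False by linarith
  qed
  have fB: "finite B" unfolding B_def by simp
  have "card ({v\<in>VV. v \<le> 2 * sr k} \<union> B) = card {v\<in>VV. v \<le> 2 * sr k} + card B"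
    by (rule card_Un_disjoint[OF fin_le fB disj])
  moreover have "card B = 2^k" unfolding B_def by (rule card_Vset_part)
  moreover have "card ({v\<in>VV. v \<le> 2 * sr k} \<union> B) \<le> card {v\<in>VV. v \<le> NN k}"
    by (rule card_mono[OF fin_le sub])
  ultimately show ?thesis using V_low[of k] by simp
qed

lemma U_lowN: "card {u\<in>UU. u \<le> NN k} \<ge> 2^(k+1)"
proof -
  have "spread ` {..<2^(k+1)} \<subseteq> {u\<in>UU. u \<le> NN k}"
  proof
    fix u assume "u \<in> spread ` {..<2^(k+1)}"
    then obtain r where r: "u = spread r" "r < 2^(Suc k)" by auto
    then have "spread r \<le> sr (Suc k)" using spread_le_sr by blast
    then show "u \<in> {u\<in>UU. u \<le> NN k}" using r unfolding UU_def NN_def by simp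
  qed
  then have "card (spread ` {..<2^(k+1)}) \<le> card {u\<in>UU. u \<le> NN k}" by (rule card_mono[OF fin_le])
  moreover have "card (spread ` {..<(2::nat)^(k+1)}) = 2^(k+1)"
    using spread_inj by (simp add: card_image inj_on_subset)
  ultimately show ?thesis by simp
qed

lemma UV_lowN: "card {a\<in>UU \<inter> VV. a \<le> NN k} \<le> k + 2"
proof -
  have "{a\<in>UU \<inter> VV. a \<le> NN k} \<subseteq> sr ` {..Suc k}"
  proof
    fix a assume a: "a \<in> {a\<in>UU \<inter> VV. a \<le> NN k}"
    then obtain L where L: "a = sr L" using UV_sr by blast
    have "sr L < sr (Suc (Suc k))" using a L unfolding NN_def by simp
    then have "L < Suc (Suc k)" using sr_less_iff by blast
    then have "L \<le> Suc k" by simp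
    then show "a \<in> sr ` {..Suc k}" using L by simp
  qed
  then have "card {a\<in>UU \<inter> VV. a \<le> NN k} \<le> card (sr ` {..Suc k})" by (intro card_mono) simp_all
  also have "\<dots> \<le> card {..Suc k}" by (rule card_image_le) simp
  finally show ?thesis by simp
qed

lemma count_lowN: "counting AA (NN k) + k + 3 \<ge> 5 * 2^k"
proof -
  define U' where "U' = {u\<in>UU. u \<le> NN k}"
  define V' where "V' = {v\<in>VV. v \<le> NN k}"
  have fU: "finite U'" unfolding U'_def by (rule fin_le)
  have fV: "finite V'" unfolding V'_def by (rule fin_le)
  have "card U' + card V' = card (U' \<union> V') + card (U' \<inter> V')" by (rule card_Un_Int[OF fU fV])
  moreover have "U' \<inter> V' = {a\<in>UU \<inter> VV. a \<le> NN k}" unfolding U'_def V'_def by auto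
  moreover have "card (U' \<union> V') \<le> counting AA (NN k)"
    unfolding counting_def U'_def V'_def AA_def by (rule card_mono[OF fin_le]) auto
  ultimately show ?thesis using U_lowN[of k] V_lowN[of k] UV_lowN[of k] unfolding U'_def V'_def by simp
qed

lemma e_lim: "(\<lambda>n::nat. (5 + 2*log 4 (3*real n + 7)) / sqrt (real n)) \<longlonglongrightarrow> 0"
  by real_asymp

lemma g_lim: "(\<lambda>k::nat. sqrt 15 * (1 - (real k + 3) / (5 * 2^k))) \<longlonglongrightarrow> sqrt 15"
  by real_asymp (simp add: sqrt_def)

lemma upper_pt:
  assumes "1 \<le> n"
  shows "real (counting AA n) / sqrt (real n) \<le> sqrt 15 + (5 + 2*log 4 (3*real n + 7)) / sqrt (real n)"
proof -
  have sp: "0 < sqrt (real n)" using assms by simp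
  have "real (counting AA n) \<le> sqrt 15 * sqrt (real n) + (5 + 2*log 4 (3*real n + 7))"
    using count_upper[of n] by (simp add: real_sqrt_mult)
  then have "real (counting AA n) / sqrt (real n) \<le> (sqrt 15 * sqrt (real n) + (5 + 2*log 4 (3*real n + 7))) / sqrt (real n)"
    using sp by (simp add: divide_right_mono)
  also have "\<dots> = sqrt 15 + (5 + 2*log 4 (3*real n + 7)) / sqrt (real n)"
    using sp by (simp add: field_simps)
  finally show ?thesis .
qed

lemma NN_mono: "strict_mono NN"
  unfolding strict_mono_Suc_iff NN_def by simp

lemma NN_pos: "1 \<le> NN k"
  unfolding NN_def by (induction k) auto

lemma NN_bound: "3 * NN k + 2 = 5 * 4^k"
  unfolding NN_def using sr_eq[of k] sr_eq[of "Suc k"] by simp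

lemma lower_pt:
  "sqrt 15 * (1 - (real k + 3) / (5 * 2^k)) \<le> real (counting AA (NN k)) / sqrt (real (NN k))"
proof -
  define m where "m = 5 * (2::real)^k - (real k + 3)"
  have p0: "0 < (2::real)^k" by simp
  have kk: "real k + 3 \<le> 5 * 2^k"
  proof -
    have "k + 3 \<le> 5 * 2^k" by (induction k) auto
    then have "real (k+3) \<le> real (5 * 2^k)" by (simp only: of_nat_le_iff)
    then show ?thesis by simp
  qed
  then have m0: "0 \<le> m" unfolding m_def by simp
  have cnt: "m \<le> real (counting AA (NN k))"
  proof -
    have "real (counting AA (NN k) + k + 3) \<ge> real (5 * 2^k)" using count_lowN[of k] by (simp only: of_nat_le_iff)
    then show ?thesis unfolding m_def by simp
  qed
  have sN: "0 < sqrt (real (NN k))" using NN_pos[of k] by simp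
  have key: "sqrt 15 * sqrt (real (NN k)) \<le> 5 * 2^k"
  proof -
    have "sqrt 15 * sqrt (real (NN k)) = sqrt (15 * real (NN k))" by (simp add: real_sqrt_mult)
    also have "\<dots> \<le> 5 * 2^k"
    proof (rule real_le_lsqrt)
      have "real (3 * NN k + 2) = real (5 * 4^k)" using NN_bound[of k] by simp
      then have "3 * real (NN k) + 2 = 5 * 4^k" by simp
      moreover have "((5::real) * 2^k)^2 = 25 * 4^k"
        by (simp add: power2_eq_square power_mult_distrib[symmetric])
      ultimately show "15 * real (NN k) \<le> (5 * 2^k)^2" by linarith
    qed simp_all
    finally show ?thesis .
  qed
  have "sqrt 15 * (1 - (real k + 3) / (5 * 2^k)) = sqrt 15 * m / (5 * 2^k)"
    unfolding m_def using p0 by (simp add: field_simps)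
  also have "\<dots> \<le> m / sqrt (real (NN k))"
  proof -
    have "sqrt 15 * m * sqrt (real (NN k)) \<le> m * (5 * 2^k)"
      using key m0 by (metis mult.commute mult.left_commute mult_left_mono)
    then show ?thesis using sN p0 by (simp add: field_simps)
  qed
  also have "\<dots> \<le> real (counting AA (NN k)) / sqrt (real (NN k))"
    using cnt sN by (simp add: divide_right_mono)
  finally show ?thesis .
qed

theorem theorem1:
  shows "\<exists>A :: nat set. AP3_covering A \<and>
     limsup (\<lambda>n. ereal (real (counting A n) / sqrt (real n))) = ereal (sqrt 15)"
proof (intro exI conjI)
  show "AP3_covering AA" by (rule AA_covering)
  define f where "f = (\<lambda>n. ereal (real (counting AA n) / sqrt (real n)))"
  define e where "e = (\<lambda>n::nat. (5 + 2*log 4 (3*real n + 7)) / sqrt (real n))"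
  have "limsup f \<le> limsup (\<lambda>n. ereal (sqrt 15 + e n))"
  proof (rule Limsup_mono)
    show "\<forall>\<^sub>F n in sequentially. f n \<le> ereal (sqrt 15 + e n)"
      using eventually_ge_at_top[of "1::nat"]
      by eventually_elim (simp add: f_def e_def upper_pt)
  qed
  also have "limsup (\<lambda>n. ereal (sqrt 15 + e n)) = ereal (sqrt 15)"
  proof (rule lim_imp_Limsup)
    show "(\<lambda>n. ereal (sqrt 15 + e n)) \<longlonglongrightarrow> ereal (sqrt 15)"
      using tendsto_add[OF tendsto_const e_lim[folded e_def], of "sqrt 15"]
      by (simp add: tendsto_ereal)
  qed simp
  finally have up: "limsup f \<le> ereal (sqrt 15)" .
  have "ereal (sqrt 15) = limsup (\<lambda>k. ereal (sqrt 15 * (1 - (real k + 3) / (5 * 2^k))))"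
    using g_lim by (intro lim_imp_Limsup[symmetric]) (simp_all add: tendsto_ereal)
  also have "\<dots> \<le> limsup (f \<circ> NN)"
    by (rule Limsup_mono) (simp add: f_def lower_pt)
  also have "\<dots> \<le> limsup f" by (rule limsup_subseq_mono[OF NN_mono])
  finally have lo: "ereal (sqrt 15) \<le> limsup f" .
  show "limsup (\<lambda>n. ereal (real (counting AA n) / sqrt (real n))) = ereal (sqrt 15)"
    using up lo unfolding f_def by simp
qed

end
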